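(* Let $F$ be an arbitrary field and let $f\in F\langle X\rangle$ be a nonzero multilinear polynomial of degree $d$. Let $n\ge 2$ be such that $d<2n$. If $c\in M_n(F)$ satisfies $$f(c,a_2,\ldots,a_d)=f(a_1,c,a_3,\ldots,a_d)=\cdots=f(a_1,\ldots,a_{d-1},c)=0$$ for all $a_1,\ldots,a_d\in M_n(F)$, then $c\in F\cdot 1$.
   Context: $F\langle X\rangle$ is the free algebra over $F$ in countably many noncommuting indeterminates $x_1,x_2,\ldots$. A polynomial $f=f(x_1,\ldots,x_d)$ is multilinear of degree $d$ if $f=\sum_{\sigma\in S_d}\lambda_\sigma x_{\sigma(1)}\cdots x_{\sigma(d)}$ with $\lambda_\sigma\in F$. $1$ denotes the identity matrix. *)

theory Defs
  imports "HOL-Analysis.Analysis"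
begin

text \<open>A multilinear polynomial of degree d in x_0,...,x_{d-1} is given by its
coefficient function lam on permutations of {0..<d}:
f = sum over sigma of lam sigma * x_{sigma 0} ... x_{sigma (d-1)}.\<close>

definition ordered_prod :: "nat \<Rightarrow> (nat \<Rightarrow> nat) \<Rightarrow> (nat \<Rightarrow> 'a::field^'n^'n) \<Rightarrow> 'a^'n^'n" where
  "ordered_prod d \<sigma> a = foldr (\<lambda>i acc. a (\<sigma> i) ** acc) [0..<d] (mat 1)"

definition ml_eval :: "nat \<Rightarrow> ((nat \<Rightarrow> nat) \<Rightarrow> 'a::field) \<Rightarrow> (nat \<Rightarrow> 'a^'n^'n) \<Rightarrow> 'a^'n^'n" where
  "ml_eval d lam a = (\<Sum>\<sigma>\<in>{\<sigma>. \<sigma> permutes {0..<d}}. mat (lam \<sigma>) ** ordered_prod d \<sigma> a)"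

definition ml_nonzero :: "nat \<Rightarrow> ((nat \<Rightarrow> nat) \<Rightarrow> 'a::field) \<Rightarrow> bool" where
  "ml_nonzero d lam \<longleftrightarrow> (\<exists>\<sigma>. \<sigma> permutes {0..<d} \<and> lam \<sigma> \<noteq> 0)"

end

theory Submission
  imports Defs
begin


lemma comb_mono:
  fixes RR CC :: "nat \<Rightarrow> nat" and a b :: nat
  assumes chain: "\<forall>t. t+1 < d \<longrightarrow> CC (\<pi> t) = RR (\<pi> (t+1))"
    and le: "\<forall>k. k \<noteq> 1 \<longrightarrow> RR k \<le> CC k"
  shows "a \<le> b \<Longrightarrow> b < d \<Longrightarrow> (\<forall>u. a \<le> u \<and> u < b \<longrightarrow> \<pi> u \<noteq> 1) \<Longrightarrow> RR (\<pi> a) \<le> RR (\<pi> b)"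
proof (induction b)
  case 0 then show ?case by simp
next
  case (Suc b)
  show ?case
  proof (cases "a = Suc b")
    case True then show ?thesis by simp
  next
    case False
    then have ab: "a \<le> b" using Suc.prems by simp
    have "RR (\<pi> a) \<le> RR (\<pi> b)" using Suc.IH[OF ab] Suc.prems by simp
    also have "\<dots> \<le> CC (\<pi> b)" using le Suc.prems ab by auto
    also have "\<dots> = RR (\<pi> (Suc b))" using chain Suc.prems by simp
    finally show ?thesis .
  qed
qed

lemma comb:
  fixes \<pi> :: "nat \<Rightarrow> nat" and x y d :: nat
  defines "RR \<equiv> \<lambda>k. if k = 1 then x else k div 2"
    and "CC \<equiv> \<lambda>k. if k = 1 then y else (k+1) div 2"
  assumes perm: "\<pi> permutes {0..<d}" and d2: "d \<ge> 2"
    and start: "RR (\<pi> 0) = 0"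
    and chain: "\<forall>t. t+1 < d \<longrightarrow> CC (\<pi> t) = RR (\<pi> (t+1))"
    and fin: "CC (\<pi> (d-1)) = d div 2"
  shows "x = 0 \<and> y = 1 \<and> (\<forall>t<d. \<pi> t = t)"
proof -
  have le: "\<forall>k. k \<noteq> 1 \<longrightarrow> RR k \<le> CC k" unfolding RR_def CC_def by simp
  note mono = comb_mono[OF chain le]
  have rng: "\<And>t. t < d \<Longrightarrow> \<pi> t < d" using perm by (metis atLeastLessThan_iff le0 permutes_in_image)
  have inj: "\<And>s t. \<pi> s = \<pi> t \<Longrightarrow> s = t" using perm by (meson permutes_inj injD)
  have surj: "\<And>k. k < d \<Longrightarrow> \<exists>s<d. \<pi> s = k"
  proof -
    fix k assume "k < d"
    then obtain s where "\<pi> s = k" using perm by (metis permutes_surj surj_def)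
    moreover have "s < d"
    proof (rule ccontr)
      assume "\<not> s < d" then have "\<pi> s = s" using perm by (simp add: permutes_not_in)
      with \<open>\<pi> s = k\<close> \<open>k < d\<close> \<open>\<not> s < d\<close> show False by simp
    qed
    ultimately show "\<exists>s<d. \<pi> s = k" by blast
  qed
  have p0: "\<pi> 0 = 0"
  proof (rule ccontr)
    assume "\<pi> 0 \<noteq> 0"
    then have "\<pi> 0 = 1" using start unfolding RR_def by (auto split: if_splits)
    then have x0: "x = 0" using start unfolding RR_def by simp
    obtain s0 where s0: "s0 < d" "\<pi> s0 = 0" using surj[of 0] d2 by auto
    have s01: "s0 \<ge> 1" using s0 \<open>\<pi> 0 = 1\<close> by (cases s0) auto
    have no1: "\<forall>u. 1 \<le> u \<and> u < s0 \<longrightarrow> \<pi> u \<noteq> 1"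
    proof (intro allI impI)
      fix u assume "1 \<le> u \<and> u < s0" then show "\<pi> u \<noteq> 1" using inj[of u 0] \<open>\<pi> 0 = 1\<close> by auto
    qed
    have "RR (\<pi> 1) \<le> RR (\<pi> s0)" using mono[OF s01 s0(1) no1] .
    then have "RR (\<pi> 1) = 0" using s0 unfolding RR_def by simp
    moreover have "\<pi> 1 \<noteq> 1" using inj[of 1 0] \<open>\<pi> 0 = 1\<close> by auto
    ultimately have "\<pi> 1 = 0" unfolding RR_def by (auto split: if_splits)
    show False
    proof (cases "d = 2")
      case True then show False using fin \<open>\<pi> 1 = 0\<close> unfolding CC_def by simp
    next
      case False
      have "CC (\<pi> 1) = RR (\<pi> (1+1))" using chain False d2 by auto
      then have "RR (\<pi> 2) = 0" using \<open>\<pi> 1 = 0\<close> unfolding CC_def by (simp add: numeral_2_eq_2)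
      moreover have "\<pi> 2 \<noteq> 0" "\<pi> 2 \<noteq> 1" using inj[of 2 1] inj[of 2 0] \<open>\<pi> 1 = 0\<close> \<open>\<pi> 0 = 1\<close> by auto
      ultimately show False unfolding RR_def by (auto split: if_splits)
    qed
  qed
  have "CC (\<pi> 0) = RR (\<pi> (0+1))" using chain d2 by auto
  then have "RR (\<pi> 1) = 0" using p0 unfolding CC_def by simp
  moreover have "\<pi> 1 \<noteq> 0" using inj[of 1 0] p0 by auto
  ultimately have p1: "\<pi> 1 = 1" and x0: "x = 0" unfolding RR_def by (auto split: if_splits)
  have ge2: "\<And>t. 2 \<le> t \<Longrightarrow> t < d \<Longrightarrow> \<pi> t \<ge> 2"
  proof -
    fix t assume "2 \<le> t" "t < d"
    then have "\<pi> t \<noteq> 0" "\<pi> t \<noteq> 1" using inj[of t 0] inj[of t 1] p0 p1 by auto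
    then show "\<pi> t \<ge> 2" by simp
  qed
  show ?thesis
  proof (cases "d = 2")
    case True
    then have "y = 1" using fin p1 unfolding CC_def by simp
    then show ?thesis using x0 p0 p1 True by (auto simp: less_2_cases_iff)
  next
    case False
    then have d3: "d \<ge> 3" using d2 by simp
    have "CC (\<pi> 1) = RR (\<pi> (1+1))" using chain d3 by auto
    then have ry: "RR (\<pi> 2) = y" using p1 unfolding CC_def by (simp add: numeral_2_eq_2)
    have "\<pi> 2 \<ge> 2" using ge2 d3 by simp
    then have y1: "y \<ge> 1" using ry unfolding RR_def by auto
    obtain s2 where s2: "s2 < d" "\<pi> s2 = 2" using surj[of 2] d3 by auto
    have s22: "2 \<le> s2" using s2 p0 p1 by (cases s2; cases "s2 - 1"; auto)
    have no1: "\<forall>u. 2 \<le> u \<and> u < s2 \<longrightarrow> \<pi> u \<noteq> 1"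
    proof (intro allI impI)
      fix u assume "2 \<le> u \<and> u < s2" then show "\<pi> u \<noteq> 1" using inj[of u 1] p1 by auto
    qed
    have "RR (\<pi> 2) \<le> RR (\<pi> s2)" using mono[OF s22 s2(1) no1] .
    then have "y \<le> 1" using ry s2 unfolding RR_def by simp
    then have y: "y = 1" using y1 by simp
    have "\<forall>t<d. \<pi> t = t"
    proof (rule allI, rule impI)
      fix t assume "t < d"
      then show "\<pi> t = t"
      proof (induction t rule: less_induct)
        case (less t)
        show ?case
        proof (cases "t < 2")
          case True then show ?thesis using p0 p1 by (auto simp: less_2_cases_iff)
        next
          case False
          then have t2: "t \<ge> 2" by simp
          have prev: "\<And>u. u < t \<Longrightarrow> \<pi> u = u" using less by simp
          have "CC (\<pi> (t-1)) = RR (\<pi> (t-1+1))" using chain less.prems t2 by auto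
          then have "CC (\<pi> (t-1)) = RR (\<pi> t)" using t2 by simp
          moreover have "CC (\<pi> (t-1)) = t div 2"
            using prev[of "t-1"] t2 y unfolding CC_def by (auto simp: Suc_diff_1)
          ultimately have rt: "\<pi> t div 2 = t div 2" using ge2[OF t2 less.prems] unfolding RR_def by auto
          have "\<pi> t \<ge> t"
          proof (rule ccontr)
            assume "\<not> \<pi> t \<ge> t" then have "\<pi> (\<pi> t) = \<pi> t" using prev by simp
            then show False using inj[of "\<pi> t" t] \<open>\<not> \<pi> t \<ge> t\<close> by auto
          qed
          show ?thesis
          proof (rule ccontr)
            assume ne: "\<pi> t \<noteq> t"
            then have pt: "\<pi> t = t + 1" "even t" using rt \<open>\<pi> t \<ge> t\<close> by arith+
            obtain s where s: "s < d" "\<pi> s = t" using surj[of t] less.prems by auto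
            have "s \<noteq> t" using ne s by auto
            moreover have "\<not> s < t" using prev[of s] s ne by auto
            ultimately have st: "t + 1 \<le> s" by simp
            have no1: "\<forall>u. t+1 \<le> u \<and> u < s \<longrightarrow> \<pi> u \<noteq> 1"
            proof (intro allI impI)
              fix u assume "t+1 \<le> u \<and> u < s" then show "\<pi> u \<noteq> 1" using inj[of u 1] p1 t2 by auto
            qed
            have "RR (\<pi> (t+1)) \<le> RR (\<pi> s)" using mono[OF st s(1) no1] .
            moreover have "RR (\<pi> (t+1)) = CC (\<pi> t)" using chain st s by simp
            moreover have "CC (\<pi> t) = t div 2 + 1" using pt t2 unfolding CC_def by auto
            moreover have "RR (\<pi> s) = t div 2" using s t2 unfolding RR_def by auto
            ultimately show False by simp
          qed
        qed
      qed
    qed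
    then show ?thesis using x0 y by simp
  qed
qed



definition unitm :: "'n \<Rightarrow> 'n \<Rightarrow> 'a::field^'n^'n" where
  "unitm i j = (\<chi> r s. if r = i \<and> s = j then 1 else 0)"

lemma unit_mult_entry: "(unitm i j ** M) $ p $ q = (if p = i then M $ j $ q else 0)"
  by (simp add: unitm_def matrix_matrix_mult_def if_distrib if_distribR sum.delta cong: if_cong)

lemma mult_unit_entry: "(M ** unitm i j) $ p $ q = (if q = j then M $ p $ i else (0::'a::field))"
  by (simp add: unitm_def matrix_matrix_mult_def if_distrib if_distribR sum.delta' cong: if_cong)

lemma mat_mult_entry: "(mat k ** M) $ p $ q = k * M $ p $ (q::'n) "
  for M :: "'a::field^'n^'n"
  by (simp add: mat_def matrix_matrix_mult_def if_distrib if_distribR sum.delta cong: if_cong)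

lemma mult_mat_comm: "(A::'a::field^'n^'n) ** (mat k ** (B::'a^'n^'n)) = mat k ** (A ** B)"
proof -
  have "(A ** (mat k ** B)) $ i $ j = (mat k ** (A ** B)) $ i $ j" for i j
  proof -
    have "(A ** (mat k ** B)) $ i $ j = (\<Sum>m\<in>UNIV. A$i$m * (mat k ** B)$m$j)" by (simp add: matrix_matrix_mult_def)
    also have "\<dots> = k * (\<Sum>m\<in>UNIV. A$i$m * B$m$j)" by (simp only: mat_mult_entry) (simp add: sum_distrib_left mult_ac)
    also have "\<dots> = (mat k ** (A ** B)) $ i $ j" by (simp only: mat_mult_entry) (simp add: matrix_matrix_mult_def)
    finally show ?thesis .
  qed
  then show ?thesis by (simp add: vec_eq_iff)
qed

lemma mult_sum_right: "(A::'a::field^'n^'n) ** (\<Sum>z\<in>S. (X z::'a^'n^'n)) = (\<Sum>z\<in>S. A ** X z)"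
  by (simp add: vec_eq_iff matrix_matrix_mult_def sum_distrib_left; subst sum.swap; simp)

lemma mult_sum_left: "(\<Sum>z\<in>S. X z) ** (B::'a::field^'n^'n) = (\<Sum>z\<in>S. X z ** B)"
  by (simp add: vec_eq_iff matrix_matrix_mult_def sum_distrib_right; subst sum.swap; simp)

fun walk :: "(nat \<Rightarrow> 'b) \<Rightarrow> (nat \<Rightarrow> 'b) \<Rightarrow> nat list \<Rightarrow> 'b \<Rightarrow> 'b \<Rightarrow> bool" where
  "walk r s [] p q = (p = q)"
| "walk r s (i#xs) p q = (r i = p \<and> walk r s xs (s i) q)"

lemma foldr_units:
  assumes "\<forall>i\<in>set xs. b i = (unitm (r i) (s i) :: 'a::field^'n^'n)"
  shows "(foldr (\<lambda>i acc. b i ** acc) xs (mat 1)) $ p $ q = (if walk r s xs p q then 1 else 0)"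
  using assms
proof (induction xs arbitrary: p)
  case Nil then show ?case by (simp add: mat_def)
next
  case (Cons i xs) then show ?case by (simp add: unit_mult_entry)
qed

lemma walk_upt:
  "m < n \<Longrightarrow> walk r s [m..<n] p q \<longleftrightarrow> (r m = p \<and> (\<forall>t. m \<le> t \<and> t+1 < n \<longrightarrow> s t = r (t+1)) \<and> s (n-1) = q)"
proof (induction "n - m" arbitrary: m p)
  case 0 then show ?case by simp
next
  case (Suc k)
  have up: "[m..<n] = m # [m+1..<n]" using Suc.prems by (simp add: upt_conv_Cons)
  show ?case
  proof (cases "m + 1 = n")
    case True then show ?thesis using up by auto
  next
    case False
    then have m1: "m + 1 < n" using Suc.prems by simp
    have IH: "walk r s [m+1..<n] (s m) q \<longleftrightarrow> (r (m+1) = s m \<and> (\<forall>t. m+1 \<le> t \<and> t+1 < n \<longrightarrow> s t = r (t+1)) \<and> s (n-1) = q)"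
      using Suc.hyps(1)[of "m+1" "s m"] Suc.hyps(2) m1 by simp
    show ?thesis unfolding up walk.simps IH
      using m1 by (auto simp: le_Suc_eq) (metis Suc_eq_plus1 le_antisym not_less_eq_eq)
  qed
qed



lemma foldr_notin: "j \<notin> \<tau> ` set xs \<Longrightarrow> foldr (\<lambda>i acc. (b(j:=v)) (\<tau> i) ** acc) xs A = foldr (\<lambda>i acc. b (\<tau> i) ** acc) xs A"
  by (induction xs) auto

lemma foldr_lin:
  fixes b :: "nat \<Rightarrow> 'a::field^'n^'n"
  assumes "distinct xs" "\<exists>!i. i \<in> set xs \<and> \<tau> i = j"
  shows "foldr (\<lambda>i acc. (b(j := \<Sum>z\<in>S. mat (k z) ** M z)) (\<tau> i) ** acc) xs (mat 1)
     = (\<Sum>z\<in>S. mat (k z) ** foldr (\<lambda>i acc. (b(j := M z)) (\<tau> i) ** acc) xs (mat 1))"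
  using assms
proof (induction xs)
  case Nil then show ?case by (auto dest: ex1_implies_ex)
next
  case (Cons i xs)
  show ?case
  proof (cases "\<tau> i = j")
    case True
    have nj: "j \<notin> \<tau> ` set xs"
    proof
      assume "j \<in> \<tau> ` set xs"
      then obtain x where x: "x \<in> set xs" "\<tau> x = j" by auto
      then have "x = i" using Cons.prems(2) True by (metis list.set_intros(1) list.set_intros(2))
      then show False using Cons.prems(1) x(1) by simp
    qed
    have F: "\<And>v. foldr (\<lambda>i acc. (b(j:=v)) (\<tau> i) ** acc) xs (mat 1) = foldr (\<lambda>i acc. b (\<tau> i) ** acc) xs (mat 1)"
      using foldr_notin[OF nj] by blast
    show ?thesis using True by (simp add: F mult_sum_left matrix_mul_assoc fun_upd_same del: fun_upd_apply)
  next
    case False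
    have d: "distinct xs" "\<exists>!i. i \<in> set xs \<and> \<tau> i = j" using Cons.prems False by auto
    show ?thesis using False Cons.IH[OF d] by (simp add: mult_sum_right mult_mat_comm)
  qed
qed

lemma foldr_conj:
  fixes a :: "nat \<Rightarrow> 'a::field^'n^'n" and P Q :: "'a^'n^'n"
  shows "xs \<noteq> [] \<Longrightarrow> Q ** P = mat 1 \<Longrightarrow> foldr (\<lambda>i acc. (P ** a (\<tau> i) ** Q) ** acc) xs (mat 1) = P ** foldr (\<lambda>i acc. a (\<tau> i) ** acc) xs (mat 1) ** Q"
proof (induction xs)
  case Nil then show ?case by simp
next
  case (Cons i xs)
  show ?case
  proof (cases "xs = []")
    case True then show ?thesis by (simp add: matrix_mul_assoc)
  next
    case False
    have "P ** a (\<tau> i) ** Q ** (P ** foldr (\<lambda>i acc. a (\<tau> i) ** acc) xs (mat 1) ** Q)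
        = P ** a (\<tau> i) ** (Q ** P) ** foldr (\<lambda>i acc. a (\<tau> i) ** acc) xs (mat 1) ** Q"
      by (simp add: matrix_mul_assoc)
    then show ?thesis using Cons False by (simp add: matrix_mul_assoc)
  qed
qed

lemma mat_mid: "mat k ** ((P::'a::field^'n^'n) ** (X::'a^'n^'n) ** (Q::'a^'n^'n)) = P ** (mat k ** X) ** Q"
proof -
  have "P ** (mat k ** X) ** Q = (mat k ** (P ** X)) ** Q" by (simp add: mult_mat_comm)
  also have "\<dots> = mat k ** ((P ** X) ** Q)" by (simp add: matrix_mul_assoc)
  finally show ?thesis by simp
qed

lemma ml_conj:
  fixes a :: "nat \<Rightarrow> 'a::field^'n^'n" and P Q :: "'a^'n^'n"
  assumes "d \<ge> 1" "Q ** P = mat 1"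
  shows "ml_eval d lam (\<lambda>i. P ** a i ** Q) = P ** ml_eval d lam a ** Q"
proof -
  have ne: "[0..<d] \<noteq> []" using assms by simp
  have "ml_eval d lam (\<lambda>i. P ** a i ** Q) = (\<Sum>\<sigma>\<in>{\<sigma>. \<sigma> permutes {0..<d}}. mat (lam \<sigma>) ** (P ** ordered_prod d \<sigma> a ** Q))"
    unfolding ml_eval_def ordered_prod_def using foldr_conj[OF ne assms(2)] by simp
  also have "\<dots> = (\<Sum>\<sigma>\<in>{\<sigma>. \<sigma> permutes {0..<d}}. P ** (mat (lam \<sigma>) ** ordered_prod d \<sigma> a) ** Q)"
    by (simp only: mat_mid)
  also have "\<dots> = P ** ml_eval d lam a ** Q"
    unfolding ml_eval_def by (simp add: mult_sum_left mult_sum_right)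
  finally show ?thesis .
qed

lemma V_conj:
  fixes c P Q :: "'a::field^'n^'n"
  assumes "d \<ge> 1" "Q ** P = mat 1" "P ** Q = mat 1"
    and V: "\<forall>j<d. \<forall>a :: nat \<Rightarrow> 'a^'n^'n. ml_eval d lam (a(j := c)) = 0"
  shows "\<forall>j<d. \<forall>a :: nat \<Rightarrow> 'a^'n^'n. ml_eval d lam (a(j := P ** c ** Q)) = 0"
proof (intro allI impI)
  fix j a assume j: "j < d"
  define b where "b = (\<lambda>i. Q ** (a::nat \<Rightarrow> 'a^'n^'n) i ** P)"
  have eq: "(\<lambda>i. P ** (b(j:=c)) i ** Q) = a(j := P ** c ** Q)"
  proof
    fix i show "P ** (b(j:=c)) i ** Q = (a(j := P ** c ** Q)) i"
    proof (cases "i = j")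
      case False
      have "P ** (Q ** a i ** P) ** Q = (P ** Q) ** a i ** (P ** Q)" by (simp add: matrix_mul_assoc)
      then show ?thesis using False assms(3) by (simp add: b_def)
    qed simp
  qed
  have "ml_eval d lam (a(j := P ** c ** Q)) = P ** ml_eval d lam (b(j:=c)) ** Q"
    using ml_conj[OF assms(1,2), of lam "b(j:=c)"] eq by simp
  also have "\<dots> = 0" using V j by (simp add: matrix_mul_assoc)
  finally show "ml_eval d lam (a(j := P ** c ** Q)) = 0" .
qed



lemma key_entry:
  fixes g :: "nat \<Rightarrow> 'n::finite" and \<sigma>0 \<tau> :: "nat \<Rightarrow> nat" and x y :: 'n
  assumes \<sigma>0: "\<sigma>0 permutes {0..<d}" and \<tau>: "\<tau> permutes {0..<d}" and d2: "d \<ge> 2"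
    and dn: "d < 2 * CARD('n)"
    and ginj: "inj_on g {0..<CARD('n)}" and gsurj: "g ` {0..<CARD('n)} = UNIV"
  shows "(ordered_prod d \<tau> ((\<lambda>i. unitm (g (inv \<sigma>0 i div 2)) (g ((inv \<sigma>0 i + 1) div 2)) :: 'a::field^'n^'n)(\<sigma>0 1 := unitm x y))) $ g 0 $ g (d div 2)
     = (if \<tau> = \<sigma>0 \<and> x = g 0 \<and> y = g 1 then 1 else 0)"
proof -
  define n where "n = CARD('n)"
  define \<pi> where "\<pi> = inv \<sigma>0 \<circ> \<tau>"
  define r where "r = (\<lambda>k. if k = 1 then x else g (k div 2))"
  define s where "s = (\<lambda>k. if k = 1 then y else g ((k+1) div 2))"
  define a where "a = (\<lambda>i. unitm (g (inv \<sigma>0 i div 2)) (g ((inv \<sigma>0 i + 1) div 2)) :: 'a::field^'n^'n)"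
  have bij1: "\<And>i. \<sigma>0 (inv \<sigma>0 i) = i" "\<And>i. inv \<sigma>0 (\<sigma>0 i) = i" using \<sigma>0 permutes_inverses by metis+
  have b: "\<forall>i\<in>set [0..<d]. (a(\<sigma>0 1 := unitm x y)) (\<tau> i) = unitm ((r \<circ> \<pi>) i) ((s \<circ> \<pi>) i)"
  proof
    fix i
    have "\<tau> i = \<sigma>0 1 \<longleftrightarrow> inv \<sigma>0 (\<tau> i) = 1" using bij1 by metis
    then show "(a(\<sigma>0 1 := unitm x y)) (\<tau> i) = unitm ((r \<circ> \<pi>) i) ((s \<circ> \<pi>) i)"
      unfolding a_def r_def s_def \<pi>_def by auto
  qed
  have E: "(ordered_prod d \<tau> (a(\<sigma>0 1 := unitm x y))) $ g 0 $ g (d div 2)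
      = (if walk (r \<circ> \<pi>) (s \<circ> \<pi>) [0..<d] (g 0) (g (d div 2)) then 1 else 0)"
    unfolding ordered_prod_def by (rule foldr_units[OF b])
  have d0: "0 < d" using d2 by simp
  have W: "walk (r \<circ> \<pi>) (s \<circ> \<pi>) [0..<d] (g 0) (g (d div 2)) \<longleftrightarrow>
      (r (\<pi> 0) = g 0 \<and> (\<forall>t. t+1 < d \<longrightarrow> s (\<pi> t) = r (\<pi> (t+1))) \<and> s (\<pi> (d-1)) = g (d div 2))"
    using walk_upt[OF d0, of "r \<circ> \<pi>" "s \<circ> \<pi>"] by simp
  have \<pi>perm: "\<pi> permutes {0..<d}" unfolding \<pi>_def using \<tau> \<sigma>0 by (simp add: permutes_compose permutes_inv)
  have iff: "walk (r \<circ> \<pi>) (s \<circ> \<pi>) [0..<d] (g 0) (g (d div 2)) \<longleftrightarrow> (\<tau> = \<sigma>0 \<and> x = g 0 \<and> y = g 1)"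
  proof
    assume "\<tau> = \<sigma>0 \<and> x = g 0 \<and> y = g 1"
    then have t: "\<tau> = \<sigma>0" and xy: "x = g 0" "y = g 1" by auto
    have pid: "\<And>t. \<pi> t = t" unfolding \<pi>_def t using bij1 by simp
    have c1: "r (\<pi> 0) = g 0" using pid r_def by simp
    have c2: "\<forall>t. t+1 < d \<longrightarrow> s (\<pi> t) = r (\<pi> (t+1))"
    proof (intro allI impI)
      fix t show "s (\<pi> t) = r (\<pi> (t+1))"
        unfolding pid s_def r_def using xy by (cases "t = 0"; cases "t = 1"; simp)
    qed
    have c3: "s (\<pi> (d-1)) = g (d div 2)"
      unfolding pid s_def using xy d2 by (cases "d = 2"; auto)
    show "walk (r \<circ> \<pi>) (s \<circ> \<pi>) [0..<d] (g 0) (g (d div 2))" using W c1 c2 c3 by simp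
  next
    assume w: "walk (r \<circ> \<pi>) (s \<circ> \<pi>) [0..<d] (g 0) (g (d div 2))"
    obtain x' where x': "x' < n" "g x' = x" using gsurj unfolding n_def by (metis UNIV_I atLeastLessThan_iff imageE)
    obtain y' where y': "y' < n" "g y' = y" using gsurj unfolding n_def by (metis UNIV_I atLeastLessThan_iff imageE)
    define RR where "RR = (\<lambda>k. if k = 1 then x' else k div 2)"
    define CC where "CC = (\<lambda>k. if k = 1 then y' else (k+1) div 2)"
    have rg: "\<And>k. r k = g (RR k)" unfolding r_def RR_def using x' by simp
    have sg: "\<And>k. s k = g (CC k)" unfolding s_def CC_def using y' by simp
    have rng: "\<And>t. t < d \<Longrightarrow> \<pi> t < d" using \<pi>perm by (metis atLeastLessThan_iff le0 permutes_in_image)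
    have RRn: "\<And>t. t < d \<Longrightarrow> RR (\<pi> t) < n"
    proof -
      fix t assume "t < d" then have "\<pi> t < d" by (rule rng)
      then show "RR (\<pi> t) < n" unfolding RR_def using x' dn n_def by auto
    qed
    have CCn: "\<And>t. t < d \<Longrightarrow> CC (\<pi> t) < n"
    proof -
      fix t assume "t < d" then have "\<pi> t < d" by (rule rng)
      then show "CC (\<pi> t) < n" unfolding CC_def using y' dn n_def by auto
    qed
    have n2: "d div 2 < n" "0 < n" using dn n_def by auto
    have geq: "\<And>u v. u < n \<Longrightarrow> v < n \<Longrightarrow> g u = g v \<Longrightarrow> u = v"
      using ginj unfolding n_def by (meson atLeastLessThan_iff inj_onD le0)
    have c: "r (\<pi> 0) = g 0" "\<forall>t. t+1 < d \<longrightarrow> s (\<pi> t) = r (\<pi> (t+1))" "s (\<pi> (d-1)) = g (d div 2)"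
      using W w by auto
    have start: "RR (\<pi> 0) = 0" using c(1) rg geq RRn d0 n2 by metis
    have chain: "\<forall>t. t+1 < d \<longrightarrow> CC (\<pi> t) = RR (\<pi> (t+1))"
    proof (intro allI impI)
      fix t assume "t + 1 < d"
      then show "CC (\<pi> t) = RR (\<pi> (t+1))" using c(2) rg sg geq RRn CCn by (metis add_lessD1)
    qed
    have fin: "CC (\<pi> (d-1)) = d div 2" using c(3) sg geq CCn n2 d0 by (metis diff_less zero_less_one)
    have C: "x' = 0 \<and> y' = 1 \<and> (\<forall>t<d. \<pi> t = t)"
      using comb[OF \<pi>perm d2] start chain fin unfolding RR_def CC_def by blast
    have "\<tau> = \<sigma>0"
    proof
      fix t show "\<tau> t = \<sigma>0 t"
      proof (cases "t < d")
        case True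
        then have "inv \<sigma>0 (\<tau> t) = t" using C unfolding \<pi>_def by simp
        then show ?thesis using bij1 by metis
      next
        case False
        then show ?thesis using \<tau> \<sigma>0 by (simp add: permutes_not_in)
      qed
    qed
    then show "\<tau> = \<sigma>0 \<and> x = g 0 \<and> y = g 1" using C x' y' by simp
  qed
  show ?thesis using E iff unfolding a_def by simp
qed



lemma unitm_entry: "(unitm i j :: 'a::field^'n^'n) $ p $ q = (if p = i \<and> q = j then 1 else 0)"
  by (simp add: unitm_def)

lemma mult_diff_right: "(A::'a::field^'n^'n) ** (B - C) = A ** B - A ** C"
  by (simp add: vec_eq_iff matrix_matrix_mult_def right_diff_distrib sum_subtractf)

lemma mult_add_left: "((A::'a::field^'n^'n) + B) ** C = A ** C + B ** C"
  by (simp add: vec_eq_iff matrix_matrix_mult_def distrib_right sum.distrib)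

lemma mult_diff_left: "((A::'a::field^'n^'n) - B) ** C = A ** C - B ** C"
  by (simp add: vec_eq_iff matrix_matrix_mult_def left_diff_distrib sum_subtractf)

lemma basis_exp: "(c::'a::field^'n^'n) = (\<Sum>z\<in>UNIV. mat (c $ fst z $ snd z) ** unitm (fst z) (snd z))"
proof -
  have "(\<Sum>z\<in>UNIV. mat (c $ fst z $ snd z) ** unitm (fst z) (snd z)) $ p $ q = c $ p $ q" for p q
  proof -
    have "(\<Sum>z\<in>UNIV. mat (c $ fst z $ snd z) ** unitm (fst z) (snd z)) $ p $ q
        = (\<Sum>z\<in>UNIV. if z = (p,q) then c $ p $ q else 0)"
      unfolding sum_component by (rule sum.cong) (auto simp: mat_mult_entry unitm_entry)
    also have "\<dots> = c $ p $ q" by simp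
    finally show ?thesis .
  qed
  then show ?thesis by (simp add: vec_eq_iff)
qed

lemma offdiag:
  fixes c :: "'a::field^'n^'n" and g :: "nat \<Rightarrow> 'n"
  assumes \<sigma>0: "\<sigma>0 permutes {0..<d}" and l0: "lam \<sigma>0 \<noteq> 0" and d2: "d \<ge> 2"
    and dn: "d < 2 * CARD('n)"
    and ginj: "inj_on g {0..<CARD('n)}" and gsurj: "g ` {0..<CARD('n)} = UNIV"
    and V: "\<forall>j<d. \<forall>a :: nat \<Rightarrow> 'a^'n^'n. ml_eval d lam (a(j := c)) = 0"
  shows "c $ g 0 $ g 1 = 0"
proof -
  define a where "a = (\<lambda>i. unitm (g (inv \<sigma>0 i div 2)) (g ((inv \<sigma>0 i + 1) div 2)) :: 'a::field^'n^'n)"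
  define j where "j = \<sigma>0 1"
  define P where "P = {\<sigma>. \<sigma> permutes {0..<d}}"
  have jd: "j < d" unfolding j_def using \<sigma>0 d2 by (metis atLeastLessThan_iff le0 less_le_trans one_less_numeral_iff semiring_norm(76) permutes_in_image)
  have lin: "ordered_prod d \<tau> (a(j := c)) = (\<Sum>z\<in>UNIV. mat (c $ fst z $ snd z) ** ordered_prod d \<tau> (a(j := unitm (fst z) (snd z))))"
    if \<tau>: "\<tau> permutes {0..<d}" for \<tau>
  proof -
    have ex: "\<exists>!i. i \<in> set [0..<d] \<and> \<tau> i = j"
    proof
      show "inv \<tau> j \<in> set [0..<d] \<and> \<tau> (inv \<tau> j) = j"
        using \<tau> jd by (metis atLeastLessThan_iff le0 permutes_inv permutes_in_image permutes_inverses(1) set_upt)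
      show "\<And>i. i \<in> set [0..<d] \<and> \<tau> i = j \<Longrightarrow> i = inv \<tau> j"
        using \<tau> by (metis permutes_inverses(2))
    qed
    have "a(j := c) = a(j := \<Sum>z\<in>UNIV. mat (c $ fst z $ snd z) ** unitm (fst z) (snd z))"
      using basis_exp[of c] by simp
    then show ?thesis unfolding ordered_prod_def using foldr_lin[OF distinct_upt ex] by simp
  qed
  have key: "(ordered_prod d \<tau> (a(j := unitm x y))) $ g 0 $ g (d div 2) = (if \<tau> = \<sigma>0 \<and> x = g 0 \<and> y = g 1 then 1 else 0)"
    if \<tau>: "\<tau> permutes {0..<d}" for \<tau> x y
    unfolding a_def j_def by (rule key_entry[OF \<sigma>0 \<tau> d2 dn ginj gsurj])
  have inner: "(ordered_prod d \<tau> (a(j := c))) $ g 0 $ g (d div 2) = (if \<tau> = \<sigma>0 then c $ g 0 $ g 1 else 0)"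
    if \<tau>: "\<tau> permutes {0..<d}" for \<tau>
  proof -
    have "(ordered_prod d \<tau> (a(j := c))) $ g 0 $ g (d div 2)
       = (\<Sum>z\<in>UNIV. c $ fst z $ snd z * (if \<tau> = \<sigma>0 \<and> fst z = g 0 \<and> snd z = g 1 then 1 else 0))"
      by (simp add: lin[OF \<tau>] mat_mult_entry key[OF \<tau>] del: One_nat_def)
    also have "\<dots> = (\<Sum>z\<in>UNIV. if z = (g 0, g 1) then (if \<tau> = \<sigma>0 then c $ g 0 $ g 1 else 0) else 0)"
      by (rule sum.cong) auto
    also have "\<dots> = (if \<tau> = \<sigma>0 then c $ g 0 $ g 1 else 0)" by simp
    finally show ?thesis .
  qed
  have "0 = (ml_eval d lam (a(j := c))) $ g 0 $ g (d div 2)" using V jd by simp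
  also have "\<dots> = (\<Sum>\<tau>\<in>P. lam \<tau> * (ordered_prod d \<tau> (a(j := c))) $ g 0 $ g (d div 2))"
    unfolding ml_eval_def P_def by (simp add: mat_mult_entry)
  also have "\<dots> = (\<Sum>\<tau>\<in>P. if \<tau> = \<sigma>0 then lam \<sigma>0 * c $ g 0 $ g 1 else 0)"
    by (rule sum.cong) (auto simp: inner P_def)
  also have "\<dots> = lam \<sigma>0 * c $ g 0 $ g 1"
    using \<sigma>0 finite_permutations[of "{0..<d}"] unfolding P_def by simp
  finally show ?thesis using l0 by simp
qed

theorem lemma2p3:
  fixes lam :: "(nat \<Rightarrow> nat) \<Rightarrow> 'a::field"
    and d :: nat
    and c :: "'a^'n^'n"
  assumes "ml_nonzero d lam"
    and "d \<ge> 1"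
    and "CARD('n) \<ge> 2"
    and "d < 2 * CARD('n)"
    and "\<forall>j<d. \<forall>a :: nat \<Rightarrow> 'a^'n^'n. ml_eval d lam (a(j := c)) = 0"
  shows "\<exists>k::'a. c = mat k"
proof -
  obtain \<sigma>0 where \<sigma>0: "\<sigma>0 permutes {0..<d}" "lam \<sigma>0 \<noteq> 0"
    using assms(1) unfolding ml_nonzero_def by blast
  show ?thesis
  proof (cases "d = 1")
    case True
    have P: "{\<sigma>. \<sigma> permutes {0..<d}} = {id}" using True by auto
    have "\<sigma>0 = id" using \<sigma>0(1) True by auto
    have "ml_eval d lam ((\<lambda>_. c)(0 := c)) = 0" using assms(5) True by blast
    then have "mat (lam id) ** c = 0" unfolding ml_eval_def ordered_prod_def P using True by simp
    then have "\<forall>p q. lam id * c $ p $ q = 0" by (metis mat_mult_entry zero_index)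
    then have "c = mat 0" using \<sigma>0(2) \<open>\<sigma>0 = id\<close> by (simp add: vec_eq_iff)
    then show ?thesis by blast
  next
    case False
    then have d2: "d \<ge> 2" using assms(2) by simp
    have offd: "c' $ p $ q = 0"
      if V: "\<forall>j<d. \<forall>a :: nat \<Rightarrow> 'a^'n^'n. ml_eval d lam (a(j := c')) = 0" and pq: "p \<noteq> q" for c' :: "'a^'n^'n" and p q
    proof -
      obtain xs :: "'n list" where xs: "set xs = UNIV - {p,q}" "distinct xs"
        using finite_distinct_list[of "UNIV - {p,q} :: 'n set"] by auto
      define L where "L = p # q # xs"
      have dL: "distinct L" using xs pq unfolding L_def by auto
      have sL: "set L = UNIV" using xs unfolding L_def by auto
      have lL: "length L = CARD('n)" using distinct_card[OF dL] sL by simp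
      have ginj: "inj_on (nth L) {0..<CARD('n)}" using inj_on_nth[OF dL] lL by simp
      have gsurj: "nth L ` {0..<CARD('n)} = UNIV" using nth_image[of "CARD('n)" L] lL sL by simp
      have "c' $ (L ! 0) $ (L ! 1) = 0" by (rule offdiag[OF \<sigma>0 d2 assms(4) ginj gsurj V])
      then show ?thesis unfolding L_def by simp
    qed
    have diag: "c $ p $ p = c $ q $ q" if pq: "p \<noteq> q" for p q
    proof -
      define E where "E = (unitm p q :: 'a^'n^'n)"
      have EE: "E ** E = 0" using pq by (simp add: vec_eq_iff E_def unit_mult_entry unitm_entry)
      have QP: "(mat 1 - E) ** (mat 1 + E) = mat 1"
        by (simp add: mult_diff_left matrix_add_ldistrib EE)
      have PQ: "(mat 1 + E) ** (mat 1 - E) = mat 1"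
        by (simp add: mult_add_left mult_diff_right EE)
      have V': "\<forall>j<d. \<forall>a :: nat \<Rightarrow> 'a^'n^'n. ml_eval d lam (a(j := (mat 1 + E) ** c ** (mat 1 - E))) = 0"
        by (rule V_conj[OF assms(2) QP PQ assms(5)])
      have z1: "((mat 1 + E) ** c ** (mat 1 - E)) $ p $ q = 0" by (rule offd[OF V' pq])
      have z2: "c $ p $ q = 0" "c $ q $ p = 0" using offd[OF assms(5)] pq by auto
      have "(mat 1 + E) ** c ** (mat 1 - E) = (c + E ** c) - (c + E ** c) ** E"
        by (simp add: mult_add_left mult_diff_right)
      then have "((mat 1 + E) ** c ** (mat 1 - E)) $ p $ q = c $ p $ q + c $ q $ q - (c $ p $ p + c $ q $ p)"
        using pq by (simp add: E_def unit_mult_entry mult_unit_entry)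
      then show ?thesis using z1 z2 by simp
    qed
    obtain p0 :: 'n where True by blast
    have "c = mat (c $ p0 $ p0)"
    proof -
      have ent: "c $ p $ q = mat (c $ p0 $ p0) $ p $ q" for p q
      proof (cases "p = q")
        case True
        have m: "mat (c $ p0 $ p0) $ p $ p = c $ p0 $ p0" by (simp add: mat_def)
        have "c $ p $ p = c $ p0 $ p0"
        proof (cases "p = p0")
          case False then show ?thesis by (rule diag)
        qed simp
        then show ?thesis using True m by simp
      next
        case False then show ?thesis using offd[OF assms(5) False] by (simp add: mat_def)
      qed
      show ?thesis unfolding vec_eq_iff using ent by blast
    qed
    then show ?thesis by blast
  qed
qed


end
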